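(* Let $\Sigma$ be a set of prime numbers, $S$ the multiplicative submonoid of $\mathbb{N}$ generated by $\Sigma$, $\mathbb{Z}[S^{-1}]\subset\mathbb{Q}$ the localization. Let $M$ be a locally compact topological $\mathbb{Z}[S^{-1}]$-module whose underlying group is $(M,+)=\mathbb{R}^n\times H$ for some $n\ge0$ and some locally compact abelian group $H$ containing a compact open subgroup. Then $\mathbb{R}^n\times 0$ is a (closed) $\mathbb{Z}[S^{-1}]$-submodule of $M$; in particular $H$ is also a $\mathbb{Z}[S^{-1}]$-module, as a quotient of $M$.
   Context: All topological groups are Hausdorff; $\mathbb{Z}[S^{-1}]$ is discrete and a locally compact topological $\mathbb{Z}[S^{-1}]$-module is a locally compact abelian group with a $\mathbb{Z}[S^{-1}]$-module structure with continuous scalar multiplication. *)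

theory Defs
  imports "HOL-Analysis.Analysis"
begin

inductive_set gen_monoid :: "nat set \<Rightarrow> nat set" for \<Sigma> :: "nat set" where
  one: "1 \<in> gen_monoid \<Sigma>"
| mult: "p \<in> \<Sigma> \<Longrightarrow> s \<in> gen_monoid \<Sigma> \<Longrightarrow> p * s \<in> gen_monoid \<Sigma>"

definition localization :: "nat set \<Rightarrow> rat set" where
  "localization S = {q. \<exists>a::int. \<exists>s\<in>S. q = of_int a / of_nat s}"

text \<open>A Z[S^-1]-module structure (scalar multiplication restricted to the ring R)
  on an abelian group, with continuous scalar multiplication (R discrete).\<close>
definition top_module :: "rat set \<Rightarrow> (rat \<Rightarrow> 'm::{topological_space,ab_group_add} \<Rightarrow> 'm) \<Rightarrow> bool" where
  "top_module R smul \<longleftrightarrow>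
     (\<forall>q\<in>R. \<forall>x y. smul q (x + y) = smul q x + smul q y) \<and>
     (\<forall>q\<in>R. \<forall>r\<in>R. \<forall>x. smul (q + r) x = smul q x + smul r x) \<and>
     (\<forall>q\<in>R. \<forall>r\<in>R. \<forall>x. smul (q * r) x = smul q (smul r x)) \<and>
     (\<forall>x. smul 1 x = x) \<and>
     (\<forall>q\<in>R. continuous_on UNIV (smul q))"

end

theory Submission
  imports Defs
begin

lemma tm_zero:
  assumes "top_module R smul" "q \<in> R"
  shows "smul q 0 = 0"
proof -
  have "smul q (0 + 0) = smul q 0 + smul q 0" using assms unfolding top_module_def by blast
  then show ?thesis by simp
qed

lemma tm_sum:
  assumes "top_module R smul" "q \<in> R"
  shows "smul q (\<Sum>i<n. y) = (\<Sum>i<(n::nat). smul q y)"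
proof (induction n)
  case 0 then show ?case using tm_zero[OF assms] by simp
next
  case (Suc n)
  have "smul q ((\<Sum>i<n. y) + y) = smul q (\<Sum>i<n. y) + smul q y"
    using assms unfolding top_module_def by blast
  then show ?case using Suc by (simp add: add.commute)
qed

lemma tm_nat:
  assumes "top_module R smul" "\<And>n::nat. of_nat n \<in> R"
  shows "smul (of_nat n) y = (\<Sum>i<n. y)"
proof (induction n)
  case 0
  have "smul (0 + 0) y = smul 0 y + smul 0 y"
    using assms(1) assms(2)[of 0] unfolding top_module_def by (metis of_nat_0)
  then show ?case by simp
next
  case (Suc n)
  have "smul (of_nat n + 1) y = smul (of_nat n) y + smul 1 y"
    using assms(1) assms(2)[of n] assms(2)[of 1] unfolding top_module_def by (metis of_nat_1)
  moreover have "smul 1 y = y" using assms(1) unfolding top_module_def by blast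
  ultimately show ?case using Suc by (simp add: add.commute)
qed

lemma sum_pair0: "(\<Sum>i<(n::nat). (w::'a::real_vector, 0::'b::ab_group_add)) = (of_nat n *\<^sub>R w, 0)"
  by (induction n) (auto simp: algebra_simps zero_prod_def)

lemma tm_int0:
  assumes "top_module R smul" "\<And>n::int. of_int n \<in> R"
  shows "snd (smul (of_int a) (w::'a::real_normed_vector, 0::'b::{topological_space,ab_group_add})) = 0"
proof -
  have nat: "\<And>n::nat. of_nat n \<in> R" using assms(2) by (metis of_int_of_nat_eq)
  have P: "snd (smul (of_nat n) (w, 0::'b)) = 0" for n
    using tm_nat[OF assms(1) nat, where n=n and y="(w, 0::'b)"] sum_pair0[where n=n and w=w] by (metis snd_conv)
  show ?thesis
  proof (cases "a \<ge> 0")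
    case True
    then obtain n where "a = int n" using nonneg_int_cases by blast
    then show ?thesis using P[of n] by simp
  next
    case False
    then obtain n where a: "a = - int n" by (metis nonpos_int_cases linear)
    have "smul (of_int a + of_nat n) (w, 0::'b) = smul (of_int a) (w, 0) + smul (of_nat n) (w, 0)"
      using assms(1) assms(2)[of a] nat[of n] unfolding top_module_def by blast
    moreover have "smul (of_int a + of_nat n) (w, 0::'b) = smul (of_nat 0) (w,0)" using a by simp
    ultimately have "snd (smul (of_int a) (w, 0::'b)) + snd (smul (of_nat n) (w, 0::'b)) = snd (smul (of_nat 0) (w,0::'b))"
      by (metis snd_add)
    then show ?thesis using P[of n] P[of 0] by simp
  qed
qed

theorem mainTheorem19:
  fixes \<Sigma> :: "nat set"
    and smul :: "rat \<Rightarrow> (real ^ 'n) \<times> ('h::{t2_space, topological_ab_group_add}) \<Rightarrow> (real ^ 'n) \<times> 'h"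
  assumes "\<forall>p\<in>\<Sigma>. prime p"
    and "locally compact (UNIV :: 'h set)"
    and "\<exists>K :: 'h set. compact K \<and> open K \<and> 0 \<in> K \<and> (\<forall>x\<in>K. \<forall>y\<in>K. x + y \<in> K \<and> - x \<in> K)"
    and "top_module (localization (gen_monoid \<Sigma>)) smul"
  shows "closed (range (\<lambda>v::real ^ 'n. (v, 0::'h))) \<and>
         (\<forall>q\<in>localization (gen_monoid \<Sigma>). \<forall>v::real ^ 'n. smul q (v, 0) \<in> range (\<lambda>w. (w, 0))) \<and>
         (\<forall>q\<in>localization (gen_monoid \<Sigma>). \<forall>x y. snd x = snd y \<longrightarrow> snd (smul q x) = snd (smul q y))"
proof -
  let ?R = "localization (gen_monoid \<Sigma>)"
  note tm = assms(4)
  have intR: "of_int a \<in> ?R" for a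
    unfolding localization_def by (rule CollectI, rule exI[of _ a], rule bexI[of _ 1]) (auto intro: gen_monoid.one[simplified])
  have natR: "of_nat n \<in> ?R" for n using intR[of "int n"] by simp
  have cl: "closed (range (\<lambda>v::real ^ 'n. (v, 0::'h)))"
  proof -
    have "range (\<lambda>v::real ^ 'n. (v, 0::'h)) = UNIV \<times> {0}" by auto
    then show ?thesis by (simp add: closed_Times)
  qed
  have key: "snd (smul q (v, 0)) = 0" if q: "q \<in> ?R" for q v
  proof -
    from q obtain a s where s: "s \<in> gen_monoid \<Sigma>" and qa: "q = of_int a / of_nat s"
      unfolding localization_def by blast
    show ?thesis
    proof (cases "s = 0")
      case True
      then have "q = of_int 0" using qa by simp
      then show ?thesis using tm_int0[OF tm intR] by metis
    next
      case False
      define y where "y = ((1 / real s) *\<^sub>R v, 0::'h)"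
      have ys: "(\<Sum>i<s. y) = (v, 0)" using sum_pair0[where n=s and w="(1 / real s) *\<^sub>R v"] False
        unfolding y_def by simp
      have "smul q (v, 0) = smul q (\<Sum>i<s. y)" using ys by simp
      also have "\<dots> = (\<Sum>i<s. smul q y)" using tm_sum[OF tm q] .
      also have "\<dots> = smul (of_nat s) (smul q y)" using tm_nat[OF tm natR] by simp
      also have "\<dots> = smul (of_nat s * q) y" using tm natR q unfolding top_module_def by metis
      also have "of_nat s * q = of_int a" using qa False by simp
      finally show ?thesis using tm_int0[OF tm intR] unfolding y_def by metis
    qed
  qed
  have c2: "\<forall>q\<in>?R. \<forall>v::real ^ 'n. smul q (v, 0) \<in> range (\<lambda>w. (w, 0))"
  proof (intro ballI allI)
    fix q v assume "q \<in> ?R"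
    then have "smul q (v, 0) = (fst (smul q (v,0)), 0)" using key by (metis prod.collapse)
    then show "smul q (v, 0) \<in> range (\<lambda>w. (w, 0))" by (metis rangeI)
  qed
  have c3: "\<forall>q\<in>?R. \<forall>x y. snd x = snd y \<longrightarrow> snd (smul q x) = snd (smul q y)"
  proof (intro ballI allI impI)
    fix q and x y :: "(real ^ 'n) \<times> 'h" assume q: "q \<in> ?R" and e: "snd x = snd y"
    have xy: "x = y + (fst x - fst y, 0)" using e by (simp add: prod_eq_iff)
    have "smul q x = smul q y + smul q (fst x - fst y, 0)"
      using tm q xy unfolding top_module_def by metis
    then show "snd (smul q x) = snd (smul q y)" using key[OF q] by simp
  qed
  show ?thesis using cl c2 c3 by blast
qed

end
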